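(* Let $r\ge 1$, $n$ be integers and let $\sigma,\sigma':\mathbb{Z}_n\to\{0,1\}$ be configurations with $\mathrm{maj}_r(\sigma)=\sigma'$. If $i\in\mathbb{Z}_n$ satisfies $\sigma'(i)\ne\sigma'(i+1)$, then $\sigma(i-r)=\sigma'(i)$ and $\sigma(i+1+r)=\sigma'(i+1)$.
   Context: Cells are elements of $\mathbb{Z}_n$, arithmetic mod $n$. For a configuration $\sigma$ and $\beta\in\{0,1\}$, $\#_\beta(\sigma[I])$ counts cells $\ell$ in the cyclic interval $I$ with $\sigma(\ell)=\beta$. The majority rule with radius $r$: $\mathrm{maj}_r(\sigma)(i)=0$ if $\#_0(\sigma[[i-r,i+r]])>\#_1(\sigma[[i-r,i+r]])$ and $=1$ otherwise, where $[i-r,i+r]$ is the cyclic interval $i-r,\dots,i+r$. *)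

theory Defs
  imports Main
begin

text \<open>Cells of Z_n are represented by the integers 0..n-1; indices are reduced mod n.
  A configuration is a function sigma :: int => nat, meaningful on {0..<n} with values in {0,1}.\<close>

definition cyc_interval :: "int \<Rightarrow> int \<Rightarrow> int \<Rightarrow> int set" where
  "cyc_interval n a b = (\<lambda>k. (a + k) mod n) ` {0..b - a}"

definition cnt :: "(int \<Rightarrow> nat) \<Rightarrow> nat \<Rightarrow> int set \<Rightarrow> nat" where
  "cnt \<sigma> \<beta> I = card {l \<in> I. \<sigma> l = \<beta>}"

definition maj :: "int \<Rightarrow> nat \<Rightarrow> (int \<Rightarrow> nat) \<Rightarrow> int \<Rightarrow> nat" where
  "maj n r \<sigma> i =
     (if cnt \<sigma> 0 (cyc_interval n (i - int r) (i + int r)) > cnt \<sigma> 1 (cyc_interval n (i - int r) (i + int r))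
      then 0 else 1)"

end

theory Submission
  imports Defs
begin

lemma cyc_shift:
  assumes "a mod n = a' mod n" "b - a = b' - a'"
  shows "cyc_interval n a b = cyc_interval n a' b'"
proof -
  have "\<And>k. (a + k) mod n = (a' + k) mod n" using assms(1) by (metis mod_add_left_eq)
  then show ?thesis unfolding cyc_interval_def using assms(2) by simp
qed

lemma inj_f:
  assumes "(n::int) > m" "m \<ge> 0"
  shows "inj_on (\<lambda>k. (a + k) mod n) {0..m}"
proof
  fix x y assume x: "x \<in> {0..m}" and y: "y \<in> {0..m}" and e: "(a + x) mod n = (a + y) mod n"
  then have "n dvd (x - y)"
    by (metis add_diff_cancel_left mod_eq_dvd_iff)
  then obtain q where q: "x - y = n * q" by blast
  have "\<bar>x - y\<bar> < n" using x y assms by auto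
  then have "n * \<bar>q\<bar> < n * 1" using q assms by (simp add: abs_mult)
  moreover have "0 < n" using assms by simp
  ultimately have "\<bar>q\<bar> < 1" using mult_less_cancel_left_pos[of n] by blast
  then have "q = 0" by simp
  then show "x = y" using q by simp
qed

lemma cnt_insert:
  assumes "finite M" "x \<notin> M"
  shows "cnt s b (insert x M) = (if s x = b then 1 else 0) + cnt s b M"
proof -
  have "{l \<in> insert x M. s l = b} = (if s x = b then insert x {l \<in> M. s l = b} else {l \<in> M. s l = b})"
    by auto
  then show ?thesis unfolding cnt_def using assms by auto
qed

lemma cnt_sum:
  assumes "finite M" "\<forall>l\<in>M. s l \<in> {0,1}"
  shows "cnt s 0 M + cnt s 1 M = card M"
proof -
  have "M = {l \<in> M. s l = 0} \<union> {l \<in> M. s l = 1}" using assms by auto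
  moreover have "card ({l \<in> M. s l = 0} \<union> {l \<in> M. s l = 1}) = card {l \<in> M. s l = 0} + card {l \<in> M. s l = 1}"
    by (rule card_Un_disjoint) (use assms in auto)
  ultimately show ?thesis unfolding cnt_def by metis
qed

lemma ar:
  fixes A B a b x y r :: nat
  assumes "A + B = 2*r" "a\<in>{0,1}" "b\<in>{0,1}"
   "x = (if (if a=0 then 1 else 0)+A > (if a=1 then 1 else 0)+B then 0 else 1)"
   "y = (if (if b=0 then 1 else 0)+A > (if b=1 then 1 else 0)+B then 0 else 1)"
   "x \<noteq> y"
  shows "a = x \<and> b = y"
  using assms by (auto split: if_splits)

theorem claim1:
  fixes n :: int and r :: nat and \<sigma> \<sigma>' :: "int \<Rightarrow> nat" and i :: int
  assumes "n \<ge> 1" and "r \<ge> 1"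
    and "\<forall>l\<in>{0..<n}. \<sigma> l \<in> {0, 1}" and "\<forall>l\<in>{0..<n}. \<sigma>' l \<in> {0, 1}"
    and "\<forall>l\<in>{0..<n}. maj n r \<sigma> l = \<sigma>' l"
    and "i \<in> {0..<n}"
    and "\<sigma>' i \<noteq> \<sigma>' ((i + 1) mod n)"
  shows "\<sigma> ((i - int r) mod n) = \<sigma>' i \<and> \<sigma> ((i + 1 + int r) mod n) = \<sigma>' ((i + 1) mod n)"
proof -
  define R where "R = int r"
  define f where "f = (\<lambda>k. (i - R + k) mod n)"
  have n0: "n > 0" using assms by simp
  have i1: "(i + 1) mod n \<in> {0..<n}" using n0 by simp
  have W0: "cyc_interval n (i - R) (i + R) = f ` {0..2*R}"
    unfolding cyc_interval_def f_def by simp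
  have "cyc_interval n ((i+1) mod n - R) ((i+1) mod n + R)
      = cyc_interval n (((i+1) - R) mod n) (((i+1) - R) mod n + 2*R)"
    by (rule cyc_shift) (simp_all add: mod_diff_left_eq)
  also have "\<dots> = cyc_interval n ((i+1) - R) ((i+1) - R + 2*R)"
    by (rule cyc_shift) simp_all
  also have "\<dots> = (\<lambda>k. (i + 1 - R + k) mod n) ` {0..2*R}"
    unfolding cyc_interval_def by simp
  also have "\<dots> = f ` {1..2*R+1}"
  proof -
    have eq: "{1..2*R+1} = (\<lambda>k. k + 1) ` {0..2*R}" by (simp add: image_add_atLeastAtMost)
    show ?thesis unfolding eq image_image f_def by (simp add: algebra_simps)
  qed
  finally have W1: "cyc_interval n ((i+1) mod n - R) ((i+1) mod n + R) = f ` {1..2*R+1}" .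
  have m0: "maj n r \<sigma> i = \<sigma>' i" using assms by auto
  have m1: "maj n r \<sigma> ((i+1) mod n) = \<sigma>' ((i+1) mod n)" using assms i1 by auto
  have big: "n > 2*R+1"
  proof (rule ccontr)
    assume "\<not> ?thesis"
    then have le: "n \<le> 2*R+1" by simp
    have "f ` {0..2*R} = f ` {1..2*R+1}"
    proof (intro equalityI subsetI)
      fix y assume "y \<in> f ` {0..2*R}"
      then obtain k where k: "k \<in> {0..2*R}" "y = f k" by auto
      show "y \<in> f ` {1..2*R+1}"
      proof (cases "k = 0")
        case True
        have "f n = f 0" unfolding f_def by simp
        moreover have "n \<in> {1..2*R+1}" using le n0 by simp
        ultimately show ?thesis using k True by (metis image_eqI)
      qed (use k in auto)
    next
      fix y assume "y \<in> f ` {1..2*R+1}"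
      then obtain k where k: "k \<in> {1..2*R+1}" "y = f k" by auto
      show "y \<in> f ` {0..2*R}"
      proof (cases "k = 2*R+1")
        case True
        have "i - R + (k - n) = (i - R + k) - n" by simp
        then have "f (k - n) = f k" unfolding f_def by (metis minus_mod_self2)
        moreover have "k - n \<in> {0..2*R}" using le n0 True by simp
        ultimately show ?thesis using k by (metis image_eqI)
      qed (use k in auto)
    qed
    then have "maj n r \<sigma> i = maj n r \<sigma> ((i+1) mod n)"
      unfolding maj_def using W0 W1 R_def by simp
    then show False using m0 m1 assms(7) by simp
  qed
  define M where "M = f ` {1..2*R}"
  have injf: "inj_on f {0..2*R+1}" unfolding f_def by (rule inj_f) (use big R_def in auto)
  have finM: "finite M" unfolding M_def by simp
  have cardM: "card M = 2*r"
  proof -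
    have "inj_on f {1..2*R}" by (rule inj_on_subset[OF injf]) auto
    then have "card M = card {1..2*R}" unfolding M_def by (rule card_image)
    then show ?thesis using R_def by simp
  qed
  have Mrange: "\<forall>l\<in>M. \<sigma> l \<in> {0,1}" using assms(3) n0 unfolding M_def f_def by auto
  have sumM: "cnt \<sigma> 0 M + cnt \<sigma> 1 M = 2*r" using cnt_sum[OF finM Mrange] cardM by simp
  have E0: "f ` {0..2*R} = insert (f 0) M"
  proof -
    have "{0..2*R} = insert 0 {1..2*R}" using R_def by auto
    then show ?thesis unfolding M_def by simp
  qed
  have E1: "f ` {1..2*R+1} = insert (f (2*R+1)) M"
  proof -
    have "{1..2*R+1} = insert (2*R+1) {1..2*R}" using R_def by auto
    then show ?thesis unfolding M_def by simp
  qed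
  have n0M: "f 0 \<notin> M"
  proof
    assume "f 0 \<in> M"
    then obtain k where "k \<in> {1..2*R}" "f 0 = f k" unfolding M_def by auto
    then show False using inj_onD[OF injf, of 0 k] R_def by auto
  qed
  have n1M: "f (2*R+1) \<notin> M"
  proof
    assume "f (2*R+1) \<in> M"
    then obtain k where "k \<in> {1..2*R}" "f (2*R+1) = f k" unfolding M_def by auto
    then show False using inj_onD[OF injf, of "2*R+1" k] R_def by auto
  qed
  have fa: "f 0 = (i - int r) mod n" unfolding f_def R_def by simp
  have fb: "f (2*R+1) = (i + 1 + int r) mod n" unfolding f_def R_def by (simp add: algebra_simps)
  have a01: "\<sigma> (f 0) \<in> {0,1}" using assms(3) n0 unfolding f_def by auto
  have b01: "\<sigma> (f (2*R+1)) \<in> {0,1}" using assms(3) n0 unfolding f_def by auto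
  have c0: "maj n r \<sigma> i = (if (if \<sigma> (f 0) = 0 then 1 else 0) + cnt \<sigma> 0 M > (if \<sigma> (f 0) = 1 then 1 else 0) + cnt \<sigma> 1 M then 0 else 1)"
    unfolding maj_def using W0 E0 cnt_insert[OF finM n0M] R_def by simp
  have c1: "maj n r \<sigma> ((i+1) mod n) = (if (if \<sigma> (f (2*R+1)) = 0 then 1 else 0) + cnt \<sigma> 0 M > (if \<sigma> (f (2*R+1)) = 1 then 1 else 0) + cnt \<sigma> 1 M then 0 else 1)"
    unfolding maj_def using W1 E1 cnt_insert[OF finM n1M] R_def by simp
  have "\<sigma> (f 0) = \<sigma>' i \<and> \<sigma> (f (2*R+1)) = \<sigma>' ((i+1) mod n)"
    by (rule ar[OF sumM a01 b01]) (use c0 c1 m0 m1 assms(7) in simp_all)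
  then show ?thesis using fa fb by simp
qed

end
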